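(* Let $Q_1,Q_2\in\mathscr{Q}$ and $\delta>0$ with $\delta\le\min\{Q_1(1),Q_2(1)\}\le\max\{Q_1(1),Q_2(1)\}\le\sqrt{1-\delta^2}$. Let $W_1,W_2$ be the vorticity profiles associated with $Q_1,Q_2$. Then there is $C>0$ depending only on $\delta$ such that $\sup_{r>0}(1+r^4)|W_1(r)-W_2(r)|\le C\|Q_1-Q_2\|_{L^\infty(\mathbb{R}_+)}$ and $\sup_{r>0}(1+r^5)|W_1'(r)-W_2'(r)|\le C\,\mathcal{N}(Q_1-Q_2)+C\bigl(1+\mathcal{N}(Q_2)\bigr)\|Q_1-Q_2\|_{L^\infty(\mathbb{R}_+)}$.
   Context: Class $\mathscr{Q}$: all $\mathcal{C}^1$ functions $Q:(0,\infty)\to(0,1]$ with $Q'>0$ on $(0,\infty)$, $Q(r)\to0$ and $rQ'(r)\to0$ as $r\to0$, and $rQ'(r)\to0$ as $r\to\infty$. For a $\mathcal{C}^1$ function $F$ on $(0,\infty)$, $\mathcal{N}(F)=\sup_{r>0}r|F'(r)|$. The vorticity profile associated with $Q\in\mathscr{Q}$: $J=Q^{-2}-1$, $\Omega(r)=\exp\bigl(-\int_0^r\frac{4}{s+\sqrt{s^2+4J(s)}}ds\bigr)$, $W(r)=\Omega(r)\bigl(2-\frac{4r}{r+\sqrt{r^2+4J(r)}}\bigr)$. *)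

theory Defs
  imports "HOL-Analysis.Analysis"
begin

text \<open>The class Q: C^1 functions (0,inf) -> (0,1] with Q' > 0, Q -> 0 and r Q'(r) -> 0 as r -> 0,
  and r Q'(r) -> 0 as r -> inf.  Functions are total on real; only values on (0,inf) matter.\<close>
definition classQ :: "(real \<Rightarrow> real) set" where
  "classQ = {Q. (\<forall>r>0. Q differentiable (at r)) \<and>
               continuous_on {0<..} (deriv Q) \<and>
               (\<forall>r>0. 0 < Q r \<and> Q r \<le> 1) \<and>
               (\<forall>r>0. deriv Q r > 0) \<and>
               (Q \<longlongrightarrow> 0) (at_right 0) \<and>
               ((\<lambda>r. r * deriv Q r) \<longlongrightarrow> 0) (at_right 0) \<and>
               ((\<lambda>r. r * deriv Q r) \<longlongrightarrow> 0) at_top}"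

definition JQ :: "(real \<Rightarrow> real) \<Rightarrow> real \<Rightarrow> real" where
  "JQ Q r = 1 / (Q r)\<^sup>2 - 1"

definition OmegaQ :: "(real \<Rightarrow> real) \<Rightarrow> real \<Rightarrow> real" where
  "OmegaQ Q r = exp (- integral {0..r} (\<lambda>s. 4 / (s + sqrt (s\<^sup>2 + 4 * JQ Q s))))"

definition WQ :: "(real \<Rightarrow> real) \<Rightarrow> real \<Rightarrow> real" where
  "WQ Q r = OmegaQ Q r * (2 - 4 * r / (r + sqrt (r\<^sup>2 + 4 * JQ Q r)))"

definition NN :: "(real \<Rightarrow> real) \<Rightarrow> real" where
  "NN F = (SUP r\<in>{0<..}. r * \<bar>deriv F r\<bar>)"

definition Linf :: "(real \<Rightarrow> real) \<Rightarrow> real" where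
  "Linf F = (SUP r\<in>{0<..}. \<bar>F r\<bar>)"

end

theory Submission
  imports Defs
begin


definition Rf :: "(real\<Rightarrow>real) \<Rightarrow> real \<Rightarrow> real" where
  "Rf Q s = sqrt (s^2 * (Q s)^2 + 4 - 4*(Q s)^2)"
definition Bf :: "(real\<Rightarrow>real) \<Rightarrow> real \<Rightarrow> real" where
  "Bf Q s = s * Q s + Rf Q s"
definition Qe :: "(real\<Rightarrow>real) \<Rightarrow> real \<Rightarrow> real" where
  "Qe Q s = (if s > 0 then Q s else 0)"
definition gf :: "(real\<Rightarrow>real) \<Rightarrow> real \<Rightarrow> real" where
  "gf Q s = 4 * Qe Q s / (s * Qe Q s + sqrt (s^2 * (Qe Q s)^2 + 4 - 4*(Qe Q s)^2))"
definition GG :: "(real\<Rightarrow>real) \<Rightarrow> real \<Rightarrow> real" where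
  "GG Q r = integral {0..r} (gf Q)"
definition hf :: "(real\<Rightarrow>real) \<Rightarrow> real \<Rightarrow> real" where
  "hf Q s = 2 - 4 * s * Q s / Bf Q s"

lemma cQ_pos: "Q \<in> classQ \<Longrightarrow> s > 0 \<Longrightarrow> 0 < Q s \<and> Q s \<le> 1"
  by (auto simp: classQ_def)

lemma cQ_deriv: "Q \<in> classQ \<Longrightarrow> s > 0 \<Longrightarrow> (Q has_real_derivative deriv Q s) (at s)"
  by (auto simp: classQ_def DERIV_deriv_iff_real_differentiable)

lemma cQ_cont: "Q \<in> classQ \<Longrightarrow> continuous_on {0<..} Q"
  by (metis DERIV_continuous cQ_deriv continuous_at_imp_continuous_on greaterThan_iff)

lemma cQ_mono: assumes Q: "Q \<in> classQ" and "0 < x" "x \<le> y" shows "Q x \<le> Q y"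
proof (rule DERIV_nonneg_imp_increasing_open[OF \<open>x \<le> y\<close>])
  fix t assume "x < t" "t < y"
  then show "\<exists>y. DERIV Q t :> y \<and> 0 \<le> y" using assms cQ_deriv[OF Q, of t] Q
    by (intro exI[of _ "deriv Q t"]) (auto simp: classQ_def less_imp_le)
next
  show "continuous_on {x..y} Q"
    using cQ_cont[OF Q] by (rule continuous_on_subset) (use assms in auto)
qed

lemma Rf_sq: "Q \<in> classQ \<Longrightarrow> s > 0 \<Longrightarrow> (Rf Q s)^2 = s^2 * (Q s)^2 + 4 - 4*(Q s)^2 \<and> Rf Q s > 0"
proof -
  assume Q: "Q \<in> classQ" and s: "s > 0"
  have q: "0 < Q s" "Q s \<le> 1" using cQ_pos[OF Q s] by auto
  have "(Q s)^2 \<le> 1" using q by (simp add: power_le_one)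
  moreover have "s^2 * (Q s)^2 > 0" using q s by simp
  ultimately have pos: "s^2 * (Q s)^2 + 4 - 4*(Q s)^2 > 0" by linarith
  then show ?thesis by (simp add: Rf_def)
qed

lemma Bf_pos: "Q \<in> classQ \<Longrightarrow> s > 0 \<Longrightarrow> Bf Q s > 0 \<and> Bf Q s \<ge> Rf Q s"
  using Rf_sq[of Q s] cQ_pos[of Q s] by (simp add: Bf_def add_pos_pos)

lemma gf_eq: "Q \<in> classQ \<Longrightarrow> s > 0 \<Longrightarrow> gf Q s = 4 * Q s / Bf Q s"
  by (simp add: gf_def Qe_def Bf_def Rf_def)

lemma Qe_cont: assumes Q: "Q \<in> classQ" shows "continuous_on {0..} (Qe Q)"
  unfolding continuous_on_eq_continuous_within
proof
  fix x :: real assume x: "x \<in> {0..}"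
  show "continuous (at x within {0..}) (Qe Q)"
  proof (cases "x = 0")
    case True
    have lim: "(Q \<longlongrightarrow> 0) (at_right 0)" using Q by (simp add: classQ_def)
    have "(Qe Q \<longlongrightarrow> 0) (at 0 within {0<..})"
      using lim by (rule Lim_transform_within[where d=1]) (auto simp: Qe_def)
    then have "(Qe Q \<longlongrightarrow> 0) (at 0 within {0..})"
      by (simp add: at_within_Ici_at_right)
    then show ?thesis using True by (simp add: continuous_within Qe_def)
  next
    case False
    then have xp: "x > 0" using x by auto
    have "isCont Q x" using cQ_deriv[OF Q xp] by (rule DERIV_isCont)
    moreover have "eventually (\<lambda>s. Q s = Qe Q s) (nhds x)"
      using eventually_nhds_in_open[of "{0<..}" x] xp
      by (auto elim!: eventually_mono simp: Qe_def)
    ultimately have "isCont (Qe Q) x" using isCont_cong by blast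
    then show ?thesis by (rule continuous_at_imp_continuous_within)
  qed
qed

lemma gf_cont: assumes Q: "Q \<in> classQ" shows "continuous_on {0..} (gf Q)"
  unfolding gf_def
proof (intro continuous_on_divide continuous_intros Qe_cont[OF Q] ballI)
  fix s :: real assume s: "s \<in> {0..}"
  show "s * Qe Q s + sqrt (s\<^sup>2 * (Qe Q s)\<^sup>2 + 4 - 4*(Qe Q s)\<^sup>2) \<noteq> 0"
  proof (cases "s > 0")
    case True
    then have "Qe Q s = Q s" by (simp add: Qe_def)
    moreover have "Bf Q s > 0" using Bf_pos[OF Q True] by simp
    ultimately show ?thesis by (simp add: Bf_def Rf_def)
  next
    case False
    then show ?thesis by (simp add: Qe_def)
  qed
qed

lemma sqrtJ: assumes Q: "Q \<in> classQ" and s: "s > 0"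
  shows "sqrt (s\<^sup>2 + 4 * JQ Q s) = Rf Q s / Q s"
proof -
  have q: "0 < Q s" "Q s \<le> 1" using cQ_pos[OF Q s] by auto
  have R: "(Rf Q s)^2 = s^2 * (Q s)^2 + 4 - 4*(Q s)^2" "Rf Q s > 0" using Rf_sq[OF Q s] by auto
  have "s\<^sup>2 + 4 * JQ Q s = (Rf Q s / Q s)^2"
    using q R by (simp add: JQ_def power_divide field_simps)
  then show ?thesis using q R by simp
qed


lemma Omega_eq: assumes Q: "Q \<in> classQ" shows "OmegaQ Q r = exp (- GG Q r)"
proof -
  have "integral {0..r} (\<lambda>s. 4 / (s + sqrt (s\<^sup>2 + 4 * JQ Q s))) = integral {0..r} (gf Q)"
  proof (rule integral_spike[of "{0}"])
    fix s assume s: "s \<in> {0..r} - {0}"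
    then have sp: "s > 0" by auto
    have q: "0 < Q s" using cQ_pos[OF Q sp] by auto
    have R: "Rf Q s > 0" using Rf_sq[OF Q sp] by auto
    show "gf Q s = 4 / (s + sqrt (s\<^sup>2 + 4 * JQ Q s))"
    proof -
      have "s + Rf Q s / Q s = (s * Q s + Rf Q s) / Q s" using q by (simp add: field_simps)
      then show ?thesis unfolding sqrtJ[OF Q sp] gf_eq[OF Q sp] Bf_def using q by simp
    qed
  qed auto
  then show ?thesis by (simp add: OmegaQ_def GG_def)
qed

lemma W_eq: assumes Q: "Q \<in> classQ" and r: "r > 0" shows "WQ Q r = exp (- GG Q r) * hf Q r"
proof -
  have q: "0 < Q r" using cQ_pos[OF Q r] by auto
  have R: "Rf Q r > 0" using Rf_sq[OF Q r] by auto
  have "2 - 4 * r / (r + sqrt (r\<^sup>2 + 4 * JQ Q r)) = hf Q r"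
  proof -
    have "r + Rf Q r / Q r = (r * Q r + Rf Q r) / Q r" using q by (simp add: field_simps)
    then show ?thesis unfolding sqrtJ[OF Q r] hf_def Bf_def using q by simp
  qed
  then show ?thesis by (simp add: WQ_def Omega_eq[OF Q])
qed

lemma GG_deriv: assumes Q: "Q \<in> classQ" and r: "r > 0"
  shows "(GG Q has_real_derivative gf Q r) (at r)"
proof -
  have c: "continuous_on {0..r+1} (gf Q)"
    using gf_cont[OF Q] by (rule continuous_on_subset) auto
  have "((\<lambda>x. integral {0..x} (gf Q)) has_real_derivative gf Q r) (at r within {0..r+1})"
    using integral_has_real_derivative[OF c, of r] r by simp
  moreover have "r \<in> interior {0..r+1}" using r by simp
  ultimately have "((\<lambda>x. integral {0..x} (gf Q)) has_real_derivative gf Q r) (at r)"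
    by (simp only: at_within_interior)
  moreover have "GG Q = (\<lambda>x. integral {0..x} (gf Q))" by (simp add: fun_eq_iff GG_def)
  ultimately show ?thesis by simp
qed



lemma div_le_div: "(b::real) > 0 \<Longrightarrow> d > 0 \<Longrightarrow> a * d \<le> c * b \<Longrightarrow> a / b \<le> c / d"
  by (simp add: divide_simps)

definition good :: "real \<Rightarrow> (real\<Rightarrow>real) \<Rightarrow> bool" where
  "good \<delta> Q \<longleftrightarrow> Q \<in> classQ \<and> 0 < \<delta> \<and> \<delta> \<le> Q 1 \<and> Q 1 \<le> sqrt (1 - \<delta>\<^sup>2)"

lemma good_basic: assumes g: "good \<delta> Q"
  shows "Q \<in> classQ" "0 < \<delta>" "\<delta> \<le> 1" "(Q 1)^2 \<le> 1 - \<delta>^2" "\<delta> \<le> Q 1"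
proof -
  show Q: "Q \<in> classQ" "0 < \<delta>" "\<delta> \<le> Q 1" using g by (auto simp: good_def)
  have q1: "0 < Q 1" "Q 1 \<le> 1" using cQ_pos[OF Q(1), of 1] by auto
  then show "\<delta> \<le> 1" using Q by linarith
  have le: "Q 1 \<le> sqrt (1 - \<delta>^2)" using g by (simp add: good_def)
  have nn: "0 \<le> 1 - \<delta>^2"
  proof (rule ccontr)
    assume "\<not> 0 \<le> 1 - \<delta>^2"
    then have "sqrt (1 - \<delta>^2) < 0" by simp
    then show False using le q1 by linarith
  qed
  have "(Q 1)^2 \<le> (sqrt (1 - \<delta>^2))^2" using le q1 by (intro power_mono) auto
  then show "(Q 1)^2 \<le> 1 - \<delta>^2" using nn by simp
qed

lemma R_lower: assumes g: "good \<delta> Q" and s: "s > 0"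
  shows "\<delta> * (1 + s) / 2 \<le> Rf Q s"
proof -
  note gb = good_basic[OF g]
  have q: "0 < Q s" "Q s \<le> 1" using cQ_pos[OF gb(1) s] by auto
  show ?thesis
  proof (cases "s \<le> 1")
    case True
    have "Q s \<le> Q 1" using cQ_mono[OF gb(1) s True] .
    then have "(Q s)^2 \<le> (Q 1)^2" using q by (intro power_mono) auto
    then have "(Q s)^2 \<le> 1 - \<delta>^2" using gb by linarith
    then have "(2*\<delta>)^2 \<le> s^2 * (Q s)^2 + 4 - 4*(Q s)^2"
      using q s by (simp add: power_mult_distrib) (smt (verit) zero_le_power2 mult_nonneg_nonneg)
    then have "2*\<delta> \<le> Rf Q s" unfolding Rf_def by (rule real_le_rsqrt)
    moreover have "\<delta> * (1 + s) / 2 \<le> 2 * \<delta>" using True gb by (simp add: field_simps)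
    ultimately show ?thesis by linarith
  next
    case False
    have "Q 1 \<le> Q s" using cQ_mono[OF gb(1), of 1 s] False by auto
    then have d: "\<delta> \<le> Q s" using gb by linarith
    then have "(s*\<delta>)^2 \<le> (s * Q s)^2" using gb s by (intro power_mono) auto
    moreover have "(Q s)^2 \<le> 1" using q by (simp add: power_le_one)
    ultimately have "(s*\<delta>)^2 \<le> s^2 * (Q s)^2 + 4 - 4*(Q s)^2"
      by (simp add: power_mult_distrib)
    then have "s*\<delta> \<le> Rf Q s" unfolding Rf_def by (rule real_le_rsqrt)
    moreover have "\<delta> * (1 + s) / 2 \<le> s * \<delta>" using False gb by (simp add: field_simps)
    ultimately show ?thesis by linarith
  qed
qed

lemma RB_upper: assumes Q: "Q \<in> classQ" and s: "s > 0"
  shows "Rf Q s \<le> s + 2" "Bf Q s \<le> 2 * (1 + s)" "Rf Q s \<le> 2 * (1 + s)"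
proof -
  have q: "0 < Q s" "Q s \<le> 1" using cQ_pos[OF Q s] by auto
  have q2: "(Q s)^2 \<le> 1" using q by (simp add: power_le_one)
  have "s^2 * (Q s)^2 \<le> s^2" using q2 by (simp add: mult_left_le)
  moreover have "0 \<le> 4*(Q s)^2" by simp
  moreover have "(s+2)^2 = s^2 + 4* s + 4" by (simp add: power2_eq_square algebra_simps)
  ultimately have "s^2 * (Q s)^2 + 4 - 4*(Q s)^2 \<le> (s+2)^2" using s by linarith
  then show R: "Rf Q s \<le> s + 2" unfolding Rf_def using s by (simp add: real_sqrt_le_iff real_le_lsqrt)
  have "s * Q s \<le> s" using q s by (simp add: mult_left_le)
  then show "Bf Q s \<le> 2 * (1 + s)" using R by (simp add: Bf_def)
  show "Rf Q s \<le> 2 * (1 + s)" using R s by simp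
qed

lemma gf_nonneg: assumes Q: "Q \<in> classQ" and s: "s \<ge> 0" shows "gf Q s \<ge> 0"
proof (cases "s > 0")
  case True then show ?thesis using gf_eq[OF Q True] Bf_pos[OF Q True] cQ_pos[OF Q True] by simp
next
  case False then show ?thesis by (simp add: gf_def Qe_def)
qed

lemma gf_integrable: "Q \<in> classQ \<Longrightarrow> 0 \<le> a \<Longrightarrow> gf Q integrable_on {a..b}"
  by (rule integrable_continuous_interval, rule continuous_on_subset[OF gf_cont]) auto

lemma GG_nonneg: assumes Q: "Q \<in> classQ" and r: "r \<ge> 0" shows "GG Q r \<ge> 0"
  unfolding GG_def by (rule integral_nonneg[OF gf_integrable[OF Q]]) (use gf_nonneg[OF Q] in auto)

lemma gf_lower: assumes g: "good \<delta> Q" and s: "s \<ge> 1"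
  shows "2 * s / (s^2 + 1/\<delta>^2) \<le> gf Q s"
proof -
  note gb = good_basic[OF g]
  define K where "K = 1/\<delta>^2"
  have sp: "s > 0" using s by simp
  have q: "0 < Q s" "Q s \<le> 1" using cQ_pos[OF gb(1) sp] by auto
  have "Q 1 \<le> Q s" using cQ_mono[OF gb(1), of 1 s] s by auto
  then have d: "\<delta> \<le> Q s" using gb by linarith
  have Kp: "K > 0" using gb by (simp add: K_def)
  have qK: "1 \<le> (Q s)^2 * K"
  proof -
    have "\<delta>^2 \<le> (Q s)^2" using d gb by (intro power_mono) auto
    then show ?thesis using gb by (simp add: K_def field_simps)
  qed
  define q where "q = Q s"
  define R where "R = Rf Q s"
  have R2: "R^2 = s^2 * q^2 + 4 - 4*q^2" "R > 0" using Rf_sq[OF gb(1) sp] by (auto simp: R_def q_def)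
  have "(s*R)^2 \<le> (q*(s^2) + 2*q*K)^2"
  proof -
    have "(q*(s^2) + 2*q*K)^2 - (s*R)^2 = 4* s^2*(q^2*K + q^2 - 1) + 4*q^2*K^2"
    proof -
      have e: "(s * R)^2 = s^2 * (s^2 * q^2 + 4 - 4 * q^2)" using R2(1) by (simp add: power_mult_distrib)
      have "(q*(s^2) + 2*q*K)^2 - s^2 * (s^2 * q^2 + 4 - 4 * q^2) = 4* s^2*(q^2*K + q^2 - 1) + 4*q^2*K^2"
        unfolding power2_eq_square by algebra
      then show ?thesis using e by simp
    qed
    moreover have "q^2*K + q^2 - 1 \<ge> 0" unfolding q_def using qK zero_le_power2[of "Q s"] by linarith
    ultimately have "(q*(s^2) + 2*q*K)^2 - (s*R)^2 \<ge> 0" by simp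
    then show ?thesis by linarith
  qed
  moreover have "0 \<le> q*(s^2) + 2*q*K" using q Kp unfolding q_def by simp
  ultimately have sR: "s*R \<le> q*(s^2) + 2*q*K" by (rule power2_le_imp_le)
  have B: "Bf Q s = s*q + R" by (simp add: Bf_def q_def R_def)
  have Bp: "Bf Q s > 0" using Bf_pos[OF gb(1) sp] by simp
  have "2 * s * Bf Q s \<le> 4 * q * (s^2 + K)"
    using sR unfolding B by (simp add: algebra_simps power2_eq_square)
  then have "2 * s / (s^2 + K) \<le> 4 * q / Bf Q s"
    using Bp Kp by (intro div_le_div) (auto simp: algebra_simps add_pos_nonneg)
  then show ?thesis using gf_eq[OF gb(1) sp] by (simp add: K_def q_def)
qed

lemma GG_lower: assumes g: "good \<delta> Q" and r: "r \<ge> 1"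
  shows "ln (r^2 + 1/\<delta>^2) - ln (1 + 1/\<delta>^2) \<le> GG Q r"
proof -
  note gb = good_basic[OF g]
  define K where "K = 1/\<delta>^2"
  have Kp: "K > 0" using gb by (simp add: K_def)
  have ftc: "((\<lambda>s. 2 * s / (s^2 + K)) has_integral (ln (r^2 + K) - ln (1^2 + K))) {1..r}"
  proof (rule fundamental_theorem_of_calculus[OF r])
    fix x assume x: "x \<in> {1..r}"
    have pos: "x^2 + K > 0" using Kp by (simp add: add_nonneg_pos)
    have "((\<lambda>s. ln (s^2 + K)) has_real_derivative (1 / (x^2 + K)) * (2 * x)) (at x within {1..r})"
      apply (rule has_field_derivative_at_within)
      apply (rule derivative_eq_intros refl)+
      using pos by (auto intro!: derivative_eq_intros simp: field_simps)
    then show "((\<lambda>s. ln (s^2 + K)) has_vector_derivative 2 * x / (x^2 + K)) (at x within {1..r})"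
      by (simp add: has_real_derivative_iff_has_vector_derivative)
  qed
  have "integral {1..r} (\<lambda>s. 2 * s / (s^2 + K)) \<le> integral {1..r} (gf Q)"
    using ftc gf_integrable[OF gb(1), of 1 r] gf_lower[OF g] by (intro integral_le) (auto simp: K_def)
  then have "ln (r^2 + K) - ln (1 + K) \<le> integral {1..r} (gf Q)" using ftc by (simp add: integral_unique)
  moreover have "integral {0..1} (gf Q) + integral {1..r} (gf Q) = GG Q r"
    unfolding GG_def using r gf_integrable[OF gb(1) order_refl, of r]
    by (intro Henstock_Kurzweil_Integration.integral_combine) simp_all
  moreover have "0 \<le> integral {0..1} (gf Q)" using GG_nonneg[OF gb(1), of 1] by (simp add: GG_def)
  ultimately show ?thesis by (simp add: K_def)
qed

lemma Om_bound: assumes g: "good \<delta> Q" and r: "r > 0"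
  shows "exp (- GG Q r) \<le> 2 * (1 + 1/\<delta>^2) / (1 + r)^2"
proof -
  note gb = good_basic[OF g]
  define K where "K = 1/\<delta>^2"
  have K1: "K \<ge> 1" using gb by (simp add: K_def power_le_one)
  have "(1+r)^2 = 2 * (1 + r^2) - (1-r)^2" by (simp add: power2_eq_square algebra_simps)
  then have sq: "(1+r)^2 \<le> 2 * (1 + r^2)" using zero_le_power2[of "1-r"] by linarith
  show ?thesis
  proof (cases "r \<le> 1")
    case True
    have "exp (- GG Q r) \<le> 1" using GG_nonneg[OF gb(1), of r] r by simp
    moreover have "(1+r)^2 \<le> 2^2" using True r by (intro power_mono) auto
    then have "1 \<le> 2 * (1 + K) / (1 + r)^2" using K1 r by (simp add: field_simps)
    ultimately show ?thesis unfolding K_def by linarith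
  next
    case False
    have "ln (r^2 + K) - ln (1 + K) \<le> GG Q r" using GG_lower[OF g, of r] False by (simp add: K_def)
    then have "exp (- GG Q r) \<le> exp (ln (1 + K) - ln (r^2 + K))" by simp
    also have "\<dots> = (1 + K) / (r^2 + K)" using K1 by (simp add: exp_diff add_nonneg_pos)
    also have "\<dots> \<le> (1 + K) / (1 + r^2)"
    proof -
      have "0 < r^2 + K" "0 < 1 + r^2" using K1 by (auto simp: add_nonneg_pos add_pos_nonneg)
      then show ?thesis using K1 by (intro divide_left_mono) auto
    qed
    also have "\<dots> \<le> 2 * (1 + K) / (1 + r)^2"
    proof (rule div_le_div)
      show "0 < 1 + r^2" by (simp add: add_pos_nonneg)
      show "0 < (1 + r)^2" using r by simp
      show "(1 + K) * (1 + r)^2 \<le> 2 * (1 + K) * (1 + r^2)"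
        using mult_left_mono[OF sq, of "1+K"] K1 by (simp add: algebra_simps)
    qed
    finally show ?thesis by (simp add: K_def)
  qed
qed



definition Pf :: "(real\<Rightarrow>real) \<Rightarrow> real \<Rightarrow> real" where
  "Pf Q s = -16 * ((1 - (Q s)^2) * Q s + s * deriv Q s) / (Rf Q s * (Bf Q s)^2)
            - 32 * Q s * (1 - (Q s)^2) / (Bf Q s)^3"

lemma hf_alt: assumes Q: "Q \<in> classQ" and s: "s > 0"
  shows "hf Q s = 8 * (1 - (Q s)^2) / (Bf Q s)^2"
proof -
  define q where "q = Q s"
  define R where "R = Rf Q s"
  have R2: "R^2 = s^2 * q^2 + 4 - 4*q^2" "R > 0" using Rf_sq[OF Q s] by (auto simp: R_def q_def)
  have Bp: "s * q + R > 0" using Bf_pos[OF Q s] by (simp add: Bf_def q_def R_def)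
  have "(R - s * q) * (s * q + R) = 4 * (1 - q^2)"
    using R2 by (simp add: power2_eq_square algebra_simps)
  then have e: "R - s * q = 4 * (1 - q^2) / (s * q + R)" using Bp by (simp add: field_simps)
  have "hf Q s = 2 * (R - s * q) / (s * q + R)"
    using Bp by (simp add: hf_def Bf_def q_def R_def field_simps)
  also have "\<dots> = 8 * (1 - q^2) / (s * q + R)^2" unfolding e using Bp by (simp add: power2_eq_square)
  finally show ?thesis by (simp add: Bf_def q_def R_def)
qed

lemma W_deriv: assumes Q: "Q \<in> classQ" and r: "r > 0"
  shows "(WQ Q has_real_derivative exp (- GG Q r) * Pf Q r) (at r)"
proof -
  define q where "q = Q r"
  define p where "p = deriv Q r"
  define R where "R = Rf Q r"
  define B where "B = Bf Q r"
  have qq: "0 < q" "q \<le> 1" using cQ_pos[OF Q r] by (auto simp: q_def)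
  have R2: "R^2 = r^2 * q^2 + 4 - 4*q^2" "R > 0" using Rf_sq[OF Q r] by (auto simp: R_def q_def)
  have BR: "B = r * q + R" by (simp add: B_def Bf_def q_def R_def)
  have Bp: "B > 0" using Bf_pos[OF Q r] by (simp add: B_def)
  have dQ: "(Q has_real_derivative p) (at r)" using cQ_deriv[OF Q r] by (simp add: p_def)
  define dR where "dR = (r * q^2 + r^2 * q * p - 4 * q * p) / R"
  have dRf: "(Rf Q has_real_derivative dR) (at r)"
  proof -
    have pos: "r^2 * q^2 + 4 - 4*q^2 > 0" using R2 by (metis zero_less_power2 less_irrefl)
    have "((\<lambda>s. sqrt (s^2 * (Q s)^2 + 4 - 4*(Q s)^2)) has_real_derivative
           inverse (sqrt (r^2 * q^2 + 4 - 4*q^2)) / 2 * ((2 * r * q^2 + r^2 * (2 * q * p)) - 4 * (2 * q * p))) (at r)"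
      using pos unfolding q_def
      by (auto intro!: derivative_eq_intros dQ[unfolded p_def] simp: p_def q_def algebra_simps)
    moreover have "inverse (sqrt (r^2 * q^2 + 4 - 4*q^2)) / 2 * ((2 * r * q^2 + r^2 * (2 * q * p)) - 4 * (2 * q * p)) = dR"
      using R2 unfolding dR_def R_def Rf_def q_def by (simp add: field_simps)
    ultimately show ?thesis by (simp add: Rf_def[abs_def])
  qed
  have dB: "(Bf Q has_real_derivative q + r * p + dR) (at r)"
    unfolding Bf_def[abs_def] using dQ dRf
    by (auto intro!: derivative_eq_intros simp: q_def)
  define Dh where "Dh = - ((4 * q + 4 * r * p) * B - 4 * r * q * (q + r * p + dR)) / (B * B)"
  have dh0: "(hf Q has_real_derivative Dh) (at r)"
    unfolding hf_def[abs_def] using dQ dB Bp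
    by (auto intro!: derivative_eq_intros simp: q_def B_def Dh_def field_simps)
  have num: "(4 * q + 4 * r * p) * B - 4 * r * q * (q + r * p + dR) = 16 * ((1 - q^2) * q + r * p) / R"
  proof -
    have "((4 * q + 4 * r * p) * B - 4 * r * q * (q + r * p + dR)) * R
          = 4 * ((q + r * p) * R^2 - r * q * (r * q^2 + r^2 * q * p - 4 * q * p))"
      using R2 unfolding BR dR_def by (simp add: field_simps power2_eq_square)
    also have "\<dots> = 16 * ((1 - q^2) * q + r * p)"
      unfolding R2(1) by (simp add: power2_eq_square algebra_simps)
    finally show ?thesis using R2 by (simp add: field_simps)
  qed
  have Dh_eq: "Dh = -16 * ((1 - q^2) * q + r * p) / (R * B^2)"
    unfolding Dh_def num using R2 Bp by (simp add: field_simps power2_eq_square)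
  have dG: "(GG Q has_real_derivative 4 * q / B) (at r)"
    using GG_deriv[OF Q r] gf_eq[OF Q r] by (simp add: q_def B_def)
  have dE: "((\<lambda>s. exp (- GG Q s) * hf Q s) has_real_derivative
        exp (- GG Q r) * (- (4 * q / B)) * hf Q r + exp (- GG Q r) * Dh) (at r)"
    using dG dh0 by (auto intro!: derivative_eq_intros)
  have "exp (- GG Q r) * (- (4 * q / B)) * hf Q r + exp (- GG Q r) * Dh = exp (- GG Q r) * Pf Q r"
  proof -
    have "- (4 * q / B) * hf Q r + Dh = Pf Q r"
      unfolding hf_alt[OF Q r] Dh_eq Pf_def
      by (simp add: q_def B_def R_def p_def[symmetric] power3_eq_cube power2_eq_square field_simps)
    then show ?thesis by (simp add: algebra_simps)
  qed
  with dE have "((\<lambda>s. exp (- GG Q s) * hf Q s) has_real_derivative exp (- GG Q r) * Pf Q r) (at r)"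
    by simp
  then show ?thesis
    by (rule has_field_derivative_transform_within_open[where S="{0<..}"])
       (use r W_eq[OF Q] in auto)
qed


lemma abs_mult_le: "\<bar>a\<bar> \<le> x \<Longrightarrow> \<bar>b\<bar> \<le> y \<Longrightarrow> \<bar>(a::real) * b\<bar> \<le> x * y"
  by (simp add: abs_mult mult_mono')

lemma abs_div_le: "\<bar>a\<bar> \<le> x \<Longrightarrow> y \<le> b \<Longrightarrow> 0 < y \<Longrightarrow> \<bar>(a::real) / b\<bar> \<le> x / y"
  by (simp add: abs_divide frac_le)

lemma diff_prod: "\<bar>(a1::real) * b1 - a2 * b2\<bar> \<le> \<bar>a1 - a2\<bar> * \<bar>b1\<bar> + \<bar>a2\<bar> * \<bar>b1 - b2\<bar>"
proof -
  have "a1 * b1 - a2 * b2 = (a1 - a2) * b1 + a2 * (b1 - b2)" by (simp add: algebra_simps)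
  then show ?thesis by (metis abs_mult abs_triangle_ineq)
qed

lemma cross_bound:
  fixes q1 q2 R1 R2 E :: real
  assumes "0 < q1" "0 < q2" "0 < E" "1/E \<le> R1" "1/E \<le> R2"
    and id: "(q1*R2)^2 - (q2*R1)^2 = 4*(q1^2 - q2^2)"
  shows "\<bar>q1*R2 - q2*R1\<bar> \<le> 4 * \<bar>q1 - q2\<bar> * E"
proof -
  have R: "0 < R1" "0 < R2" using assms by (auto intro: less_le_trans[of 0 "1/E"])
  define Y where "Y = q1*R2 + q2*R1"
  have Yge: "(q1 + q2) / E \<le> Y"
  proof -
    have "q1 * (1/E) \<le> q1 * R2" using assms(1,5) by (intro mult_left_mono) auto
    moreover have "q2 * (1/E) \<le> q2 * R1" using assms(2,4) by (intro mult_left_mono) auto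
    ultimately show ?thesis unfolding Y_def by (simp add: add_divide_distrib)
  qed
  have Yp: "0 < Y" using assms R unfolding Y_def by (simp add: add_pos_pos)
  have "(q1*R2 - q2*R1) * Y = 4*(q1 - q2)*(q1 + q2)"
    using id unfolding Y_def by (simp add: power2_eq_square algebra_simps)
  then have "\<bar>q1*R2 - q2*R1\<bar> * Y = 4*\<bar>q1 - q2\<bar>*(q1 + q2)"
    using assms Yp by (metis abs_mult abs_of_pos abs_numeral add_pos_pos)
  also have "\<dots> \<le> 4*\<bar>q1 - q2\<bar>*(E * Y)"
  proof -
    have "q1 + q2 \<le> E * Y" using Yge assms by (simp add: field_simps)
    then show ?thesis by (intro mult_left_mono) auto
  qed
  finally have "\<bar>q1*R2 - q2*R1\<bar> * Y \<le> (4 * \<bar>q1 - q2\<bar> * E) * Y" by (simp add: algebra_simps)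
  then show ?thesis using Yp by simp
qed

lemma pt1: assumes g: "good \<delta> Q" and s: "s > 0" and E: "E = 2 / (\<delta> * (1 + s))"
  shows "0 < E" "1/E \<le> Rf Q s" "Rf Q s \<le> Bf Q s" "s * E \<le> 2/\<delta>" "E \<le> 2/\<delta>"
    "\<bar>gf Q s\<bar> \<le> 4 * E" "\<bar>hf Q s\<bar> \<le> 8 * E^2" "\<bar>Q s / Rf Q s\<bar> \<le> E"
    "0 < exp (- GG Q s)" "exp (- GG Q s) \<le> E^2" "\<bar>1 / Rf Q s\<bar> \<le> E" "\<bar>1 / Bf Q s\<bar> \<le> E"
    "1 + s = 2 / (\<delta> * E)"
proof -
  note gb = good_basic[OF g]
  have q: "0 < Q s" "Q s \<le> 1" using cQ_pos[OF gb(1) s] by auto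
  show Ep: "0 < E" using E gb s by simp
  have iE: "1/E = \<delta> * (1 + s) / 2" using E by simp
  show RE: "1/E \<le> Rf Q s" unfolding iE by (rule R_lower[OF g s])
  show RB: "Rf Q s \<le> Bf Q s" using Bf_pos[OF gb(1) s] by simp
  have Rp: "0 < Rf Q s" using Rf_sq[OF gb(1) s] by simp
  have "s * E = 2/\<delta> * (s/(1+s))" using E gb s by (simp add: field_simps)
  moreover have "s/(1+s) \<le> 1" using s by simp
  moreover have "0 \<le> 2/\<delta>" using gb by simp
  ultimately show "s * E \<le> 2/\<delta>" by (metis mult.right_neutral mult_left_mono)
  have "E = 2/\<delta> * (1/(1+s))" using E gb s by (simp add: field_simps)
  moreover have "1/(1+s) \<le> 1" using s by simp
  moreover have "0 \<le> 2/\<delta>" using gb by simp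
  ultimately show "E \<le> 2/\<delta>" by (metis mult.right_neutral mult_left_mono)
  show "1 + s = 2 / (\<delta> * E)" using E gb s by (simp add: field_simps)
  have iR: "\<bar>1 / Rf Q s\<bar> \<le> E" using Rp RE Ep by (simp add: field_simps)
  then show "\<bar>1 / Rf Q s\<bar> \<le> E" .
  have BE: "1/E \<le> Bf Q s" using RE RB by linarith
  have Bp: "0 < Bf Q s" using Bf_pos[OF gb(1) s] by simp
  show iB: "\<bar>1 / Bf Q s\<bar> \<le> E" using Bp BE Ep by (simp add: field_simps)
  have "\<bar>gf Q s\<bar> = 4 * Q s * \<bar>1 / Bf Q s\<bar>" using gf_eq[OF gb(1) s] q Bp by simp
  also have "\<dots> \<le> 4 * 1 * E" using q iB by (intro mult_mono) auto
  finally show "\<bar>gf Q s\<bar> \<le> 4 * E" by simp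
  have "\<bar>Q s / Rf Q s\<bar> = Q s * \<bar>1 / Rf Q s\<bar>" using q Rp by simp
  also have "\<dots> \<le> 1 * E" using q iR by (intro mult_mono) auto
  finally show "\<bar>Q s / Rf Q s\<bar> \<le> E" by simp
  have "\<bar>hf Q s\<bar> = 8 * (1 - (Q s)^2) * (\<bar>1 / Bf Q s\<bar>)^2"
    using hf_alt[OF gb(1) s] q Bp by (simp add: power_le_one power_divide abs_mult)
  also have "\<dots> \<le> 8 * 1 * E^2"
    using q iB by (intro mult_mono power_mono) (auto simp: power_le_one)
  finally show "\<bar>hf Q s\<bar> \<le> 8 * E^2" by simp
  show "0 < exp (- GG Q s)" by simp
  have "exp (- GG Q s) \<le> 2 * (1 + 1/\<delta>^2) / (1 + s)^2" by (rule Om_bound[OF g s])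
  also have "\<dots> \<le> E^2"
  proof -
    have "\<delta>^2 \<le> 1" using gb by (simp add: power_le_one)
    have e1: "2 * (1 + 1/\<delta>^2) = (2*\<delta>^2 + 2)/\<delta>^2" using gb by (simp add: field_simps)
    have "2*\<delta>^2 + 2 \<le> 4" using \<open>\<delta>^2 \<le> 1\<close> by linarith
    then have "(2*\<delta>^2 + 2)/\<delta>^2 \<le> 4/\<delta>^2" by (intro divide_right_mono) auto
    then have "2 * (1 + 1/\<delta>^2) \<le> 4 / \<delta>^2" using e1 by simp
    then have "2 * (1 + 1/\<delta>^2) / (1 + s)^2 \<le> (4 / \<delta>^2) / (1 + s)^2"
      using s by (intro divide_right_mono) auto
    also have "\<dots> = E^2" using E by (simp add: power_divide power_mult_distrib)
    finally show ?thesis .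
  qed
  finally show "exp (- GG Q s) \<le> E^2" .
qed

lemma pt2: assumes g1: "good \<delta> Q1" and g2: "good \<delta> Q2" and s: "s > 0"
  and E: "E = 2 / (\<delta> * (1 + s))" and Lb: "\<forall>x>0. \<bar>Q1 x - Q2 x\<bar> \<le> L"
  shows "\<bar>Q1 s / Rf Q1 s - Q2 s / Rf Q2 s\<bar> \<le> 4 * L * E^3"
    "\<bar>gf Q1 s - gf Q2 s\<bar> \<le> 16 * L * E^3"
    "\<bar>hf Q1 s - hf Q2 s\<bar> \<le> 32 * L * E^2 / \<delta>"
    "\<bar>1 / Rf Q1 s - 1 / Rf Q2 s\<bar> \<le> 16 * L * E / \<delta>^2"
    "\<bar>1 / Bf Q1 s - 1 / Bf Q2 s\<bar> \<le> (2/\<delta> + 16/\<delta>^2) * L * E"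
proof -
  note gb1 = good_basic[OF g1] and gb2 = good_basic[OF g2]
  note p1 = pt1[OF g1 s E] and p2 = pt1[OF g2 s E]
  define q1 where "q1 = Q1 s"
  define q2 where "q2 = Q2 s"
  define R1 where "R1 = Rf Q1 s"
  define R2 where "R2 = Rf Q2 s"
  define B1 where "B1 = Bf Q1 s"
  define B2 where "B2 = Bf Q2 s"
  have q1: "0 < q1" "q1 \<le> 1" using cQ_pos[OF gb1(1) s] by (auto simp: q1_def)
  have q2: "0 < q2" "q2 \<le> 1" using cQ_pos[OF gb2(1) s] by (auto simp: q2_def)
  have R1: "R1^2 = s^2 * q1^2 + 4 - 4*q1^2" "R1 > 0" using Rf_sq[OF gb1(1) s] by (auto simp: R1_def q1_def)
  have R2: "R2^2 = s^2 * q2^2 + 4 - 4*q2^2" "R2 > 0" using Rf_sq[OF gb2(1) s] by (auto simp: R2_def q2_def)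
  have B1: "B1 = s * q1 + R1" by (simp add: B1_def Bf_def q1_def R1_def)
  have B2: "B2 = s * q2 + R2" by (simp add: B2_def Bf_def q2_def R2_def)
  have Ep: "0 < E" using p1 by simp
  have L: "\<bar>q1 - q2\<bar> \<le> L" using Lb s by (simp add: q1_def q2_def)
  have L0: "0 \<le> L" using L by linarith
  have RE1: "1/E \<le> R1" using p1(2) by (simp only: R1_def)
  have RE2: "1/E \<le> R2" using p2(2) by (simp only: R2_def)
  have iR1: "\<bar>1/R1\<bar> \<le> E" using p1(11) by (simp only: R1_def)
  have iR2: "\<bar>1/R2\<bar> \<le> E" using p2(11) by (simp only: R2_def)
  have iB1: "\<bar>1/B1\<bar> \<le> E" using p1(12) by (simp only: B1_def)
  have iB2: "\<bar>1/B2\<bar> \<le> E" using p2(12) by (simp only: B2_def)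
  have Bp1: "B1 > 0" and Bp2: "B2 > 0" using Bf_pos[OF gb1(1) s] Bf_pos[OF gb2(1) s] by (auto simp: B1_def B2_def)
  have idc: "(q1*R2)^2 - (q2*R1)^2 = 4*(q1^2 - q2^2)"
    unfolding power_mult_distrib R1(1) R2(1) by (simp add: algebra_simps)
  have cr: "\<bar>q1*R2 - q2*R1\<bar> \<le> 4 * L * E"
  proof -
    have "\<bar>q1*R2 - q2*R1\<bar> \<le> 4 * \<bar>q1 - q2\<bar> * E"
      by (rule cross_bound[OF q1(1) q2(1) Ep RE1 RE2 idc])
    also have "\<dots> \<le> 4 * L * E" using L Ep by (intro mult_right_mono) auto
    finally show ?thesis .
  qed
  have "q1/R1 - q2/R2 = (q1*R2 - q2*R1) * (1/R1) * (1/R2)" using R1 R2 by (simp add: field_simps)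
  then have "\<bar>q1/R1 - q2/R2\<bar> \<le> (4 * L * E) * E * E"
    using cr iR1 iR2 by (simp only: abs_mult_le)
  then show "\<bar>Q1 s / Rf Q1 s - Q2 s / Rf Q2 s\<bar> \<le> 4 * L * E^3"
    by (simp add: q1_def q2_def R1_def R2_def power3_eq_cube algebra_simps)
  have gd: "gf Q1 s - gf Q2 s = 4 * (q1*R2 - q2*R1) * (1/B1) * (1/B2)"
    unfolding gf_eq[OF gb1(1) s] gf_eq[OF gb2(1) s] q1_def[symmetric] q2_def[symmetric]
      B1_def[symmetric] B2_def[symmetric]
    using Bp1 Bp2 unfolding B1 B2 by (simp add: field_simps)
  have "\<bar>4 * (q1*R2 - q2*R1)\<bar> \<le> 4 * (4 * L * E)" using cr by simp
  then have gdb: "\<bar>gf Q1 s - gf Q2 s\<bar> \<le> 4 * (4 * L * E) * E * E"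
    unfolding gd using iB1 iB2 by (simp only: abs_mult_le)
  then show "\<bar>gf Q1 s - gf Q2 s\<bar> \<le> 16 * L * E^3" by (simp add: power3_eq_cube algebra_simps)
  have "hf Q1 s - hf Q2 s = - s * (gf Q1 s - gf Q2 s)"
    unfolding hf_def gf_eq[OF gb1(1) s] gf_eq[OF gb2(1) s] by (simp add: algebra_simps)
  then have "\<bar>hf Q1 s - hf Q2 s\<bar> = s * \<bar>gf Q1 s - gf Q2 s\<bar>" using s by (simp add: abs_mult)
  also have "\<dots> \<le> s * (16 * L * E^3)" using gdb s by (intro mult_left_mono) (auto simp: power3_eq_cube algebra_simps)
  also have "\<dots> = (s * E) * (16 * L * E^2)" by (simp add: power3_eq_cube power2_eq_square algebra_simps)
  also have "\<dots> \<le> (2/\<delta>) * (16 * L * E^2)" by (rule mult_right_mono[OF p1(4)]) (use L0 in simp)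
  finally show "\<bar>hf Q1 s - hf Q2 s\<bar> \<le> 32 * L * E^2 / \<delta>" by simp
  have dR: "\<bar>R1 - R2\<bar> \<le> 16 * L / (\<delta>^2 * E)"
  proof -
    have "(R1 - R2) * (R1 + R2) = (s^2 - 4) * ((q1 - q2) * (q1 + q2))"
      using R1(1) R2(1) by (simp add: power2_eq_square algebra_simps)
    then have "\<bar>R1 - R2\<bar> * \<bar>R1 + R2\<bar> = \<bar>s^2 - 4\<bar> * (\<bar>q1 - q2\<bar> * \<bar>q1 + q2\<bar>)"
      by (metis abs_mult)
    moreover have "\<bar>R1 + R2\<bar> = R1 + R2" "\<bar>q1 + q2\<bar> = q1 + q2" using R1 R2 q1 q2 by auto
    ultimately have "\<bar>R1 - R2\<bar> * (R1 + R2) = \<bar>s^2 - 4\<bar> * (\<bar>q1 - q2\<bar> * (q1 + q2))" by simp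
    also have "\<dots> \<le> (s^2 + 4) * (L * 2)"
    proof -
      have "\<bar>s^2 - 4\<bar> \<le> s^2 + 4" using zero_le_power2[of s] by (simp add: abs_le_iff)
      moreover have "\<bar>q1 - q2\<bar> * (q1 + q2) \<le> L * 2" using L q1 q2 L0 by (intro mult_mono) auto
      ultimately show ?thesis by (rule mult_mono) (use q1 q2 in auto)
    qed
    finally have a: "\<bar>R1 - R2\<bar> * (R1 + R2) \<le> (s^2 + 4) * (L * 2)" .
    have "\<bar>R1 - R2\<bar> * (2/E) \<le> \<bar>R1 - R2\<bar> * (R1 + R2)"
      using RE1 RE2 by (intro mult_left_mono) auto
    with a have "\<bar>R1 - R2\<bar> * (2/E) \<le> (s^2 + 4) * (L * 2)" by linarith
    then have b: "\<bar>R1 - R2\<bar> \<le> (s^2 + 4) * L * E" using Ep by (simp add: field_simps)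
    have "s^2 + 4 \<le> 4 * (1 + s)^2" using s by (simp add: power2_eq_square algebra_simps)
    also have "\<dots> = 16 / (\<delta>^2 * E^2)" using p1(13) by (simp add: power_divide power_mult_distrib)
    finally have "(s^2 + 4) * L * E \<le> 16 / (\<delta>^2 * E^2) * L * E"
      using L0 Ep by (intro mult_right_mono) auto
    also have "\<dots> = 16 * L / (\<delta>^2 * E)" using Ep by (simp add: power2_eq_square field_simps)
    finally show ?thesis using b by linarith
  qed
  have "1/R1 - 1/R2 = (R2 - R1) * (1/R1) * (1/R2)" using R1 R2 by (simp add: field_simps)
  then have "\<bar>1/R1 - 1/R2\<bar> \<le> (16 * L / (\<delta>^2 * E)) * E * E"
    using dR iR1 iR2 by (simp only: abs_mult_le abs_minus_commute)
  then show "\<bar>1 / Rf Q1 s - 1 / Rf Q2 s\<bar> \<le> 16 * L * E / \<delta>^2"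
    using Ep by (simp add: R1_def R2_def power2_eq_square field_simps)
  have dB: "\<bar>B1 - B2\<bar> \<le> (2/\<delta> + 16/\<delta>^2) * L / E"
  proof -
    have "B1 - B2 = s * (q1 - q2) + (R1 - R2)" unfolding B1 B2 by (simp add: algebra_simps)
    then have "\<bar>B1 - B2\<bar> \<le> s * \<bar>q1 - q2\<bar> + \<bar>R1 - R2\<bar>" using s by (simp add: abs_mult abs_triangle_ineq[THEN order_trans])
    also have "\<dots> \<le> s * L + 16 * L / (\<delta>^2 * E)" using L dR s by (intro add_mono mult_left_mono) auto
    also have "s * L \<le> 2/\<delta> * L / E"
    proof -
      have "s = (s * E) / E" using Ep by simp
      also have "\<dots> \<le> 2/\<delta> / E" using p1(4) Ep by (intro divide_right_mono) auto
      finally have "s \<le> 2/\<delta> / E" .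
      then have "s * L \<le> (2/\<delta> / E) * L" using L0 by (rule mult_right_mono)
      then show ?thesis by simp
    qed
    then have "s * L + 16 * L / (\<delta>^2 * E) \<le> 2/\<delta> * L / E + 16 * L / (\<delta>^2 * E)" by linarith
    also have "\<dots> = (2/\<delta> + 16/\<delta>^2) * L / E" using Ep gb1 by (simp add: field_simps)
    finally show ?thesis .
  qed
  have "1/B1 - 1/B2 = (B2 - B1) * (1/B1) * (1/B2)" using Bp1 Bp2 by (simp add: field_simps)
  then have "\<bar>1/B1 - 1/B2\<bar> \<le> ((2/\<delta> + 16/\<delta>^2) * L / E) * E * E"
    using dB iB1 iB2 by (simp only: abs_mult_le abs_minus_commute)
  moreover have "((2/\<delta> + 16/\<delta>^2) * L / E) * E * E = (2/\<delta> + 16/\<delta>^2) * L * E" using Ep by simp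
  ultimately have "\<bar>1/B1 - 1/B2\<bar> \<le> (2/\<delta> + 16/\<delta>^2) * L * E" by (simp only:)
  then show "\<bar>1 / Bf Q1 s - 1 / Bf Q2 s\<bar> \<le> (2/\<delta> + 16/\<delta>^2) * L * E"
    by (simp only: B1_def B2_def)
qed

lemma gf_zero: "gf Q 0 = 0" by (simp add: gf_def Qe_def)

lemma int_inv_sq: fixes r :: real assumes r: "r \<ge> 0"
  shows "((\<lambda>s. 1 / (1 + s)^2) has_integral (1 - 1 / (1 + r))) {0..r}"
proof -
  have "((\<lambda>s. 1 / (1 + s)^2) has_integral ((- 1 / (1 + r)) - (- 1 / (1 + 0)))) {0..r}"
  proof (rule fundamental_theorem_of_calculus[OF r])
    fix x assume x: "x \<in> {0..r}"
    then have xp: "1 + x \<noteq> 0" by auto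
    have "((\<lambda>s. - 1 / (1 + s)) has_real_derivative 1 / (1 + x)^2) (at x within {0..r})"
      apply (rule has_field_derivative_at_within)
      using xp by (auto intro!: derivative_eq_intros simp: power2_eq_square field_simps)
    then show "((\<lambda>s. - 1 / (1 + s)) has_vector_derivative 1 / (1 + x)^2) (at x within {0..r})"
      by (simp add: has_real_derivative_iff_has_vector_derivative)
  qed
  then show ?thesis by simp
qed

lemma GG_diff: assumes g1: "good \<delta> Q1" and g2: "good \<delta> Q2" and r: "r \<ge> 0"
  and Lb: "\<forall>x>0. \<bar>Q1 x - Q2 x\<bar> \<le> L"
  shows "\<bar>GG Q1 r - GG Q2 r\<bar> \<le> 128 * L / \<delta>^3"
proof -
  note gb1 = good_basic[OF g1] and gb2 = good_basic[OF g2]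
  have L0: "0 \<le> L" using Lb by (metis abs_ge_zero order_trans zero_less_one)
  have i1: "gf Q1 integrable_on {0..r}" and i2: "gf Q2 integrable_on {0..r}"
    using gf_integrable[OF gb1(1) order_refl] gf_integrable[OF gb2(1) order_refl] by auto
  have ik: "((\<lambda>s. 128 * L / \<delta>^3 * (1 / (1 + s)^2)) has_integral (128 * L / \<delta>^3 * (1 - 1 / (1 + r)))) {0..r}"
    by (rule has_integral_mult_right[OF int_inv_sq[OF r]])
  have pw: "\<bar>gf Q1 s - gf Q2 s\<bar> \<le> 128 * L / \<delta>^3 * (1 / (1 + s)^2)" if s: "s \<in> {0..r}" for s
  proof (cases "s = 0")
    case True then show ?thesis using L0 gb1 by (simp add: gf_zero)
  next
    case False
    then have sp: "s > 0" using s by auto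
    define E where "E = 2 / (\<delta> * (1 + s))"
    have "\<bar>gf Q1 s - gf Q2 s\<bar> \<le> 16 * L * E^3" by (rule pt2(2)[OF g1 g2 sp E_def Lb])
    also have "\<dots> = 128 * L / \<delta>^3 * (1 / (1 + s)^3)" by (simp add: E_def power_divide power_mult_distrib)
    also have "\<dots> \<le> 128 * L / \<delta>^3 * (1 / (1 + s)^2)"
    proof (rule mult_left_mono)
      have "(1 + s)^2 \<le> (1 + s)^3" using sp by (simp add: power_increasing)
      then show "1 / (1 + s)^3 \<le> 1 / (1 + s)^2" using sp by (intro divide_left_mono) auto
      show "0 \<le> 128 * L / \<delta>^3" using L0 gb1 by simp
    qed
    finally show ?thesis .
  qed
  have "\<bar>GG Q1 r - GG Q2 r\<bar> = \<bar>integral {0..r} (\<lambda>s. gf Q1 s - gf Q2 s)\<bar>"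
    unfolding GG_def integral_diff[OF i1 i2] ..
  also have "\<dots> \<le> integral {0..r} (\<lambda>s. 128 * L / \<delta>^3 * (1 / (1 + s)^2))"
    using integral_norm_bound_integral[OF integrable_diff[OF i1 i2] has_integral_integrable[OF ik]] pw
    by simp
  also have "\<dots> = 128 * L / \<delta>^3 * (1 - 1 / (1 + r))" using ik by (rule integral_unique)
  also have "\<dots> \<le> 128 * L / \<delta>^3 * 1"
    using L0 gb1 r by (intro mult_left_mono) auto
  finally show ?thesis by simp
qed



lemma tri3: "\<bar>- 2 * (a::real) - 16 * b - c\<bar> \<le> 2 * \<bar>a\<bar> + 16 * \<bar>b\<bar> + \<bar>c\<bar>"
  by (auto simp: abs_real_def)

lemma Pf_split: assumes Q: "Q \<in> classQ" and s: "s > 0"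
  shows "Pf Q s = - 2 * hf Q s * (Q s / Rf Q s)
     + (- 16 * s * ((1 / Rf Q s) * (1 / Bf Q s)^2)) * deriv Q s - gf Q s * hf Q s"
proof -
  have R: "Rf Q s > 0" using Rf_sq[OF Q s] by simp
  have B: "Bf Q s > 0" using Bf_pos[OF Q s] by simp
  show ?thesis unfolding Pf_def hf_alt[OF Q s] gf_eq[OF Q s]
    using R B by (simp add: field_simps power2_eq_square power3_eq_cube)
qed

lemma pt3: assumes g1: "good \<delta> Q1" and g2: "good \<delta> Q2" and s: "s > 0"
  and E: "E = 2 / (\<delta> * (1 + s))" and Lb: "\<forall>x>0. \<bar>Q1 x - Q2 x\<bar> \<le> L"
  and N1: "s * \<bar>deriv Q1 s\<bar> \<le> N1" and N: "s * \<bar>deriv Q1 s - deriv Q2 s\<bar> \<le> N"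
  and N2: "s * \<bar>deriv Q2 s\<bar> \<le> N2"
  shows "\<bar>Pf Q1 s\<bar> \<le> (48 + 16 * N1) * E^3"
    "\<bar>Pf Q1 s - Pf Q2 s\<bar> \<le> ((192/\<delta> + 768/\<delta>^2) * L + 16 * N + 16 * (48/\<delta>^2 + 4/\<delta>) * L * N2) * E^3"
proof -
  note gb1 = good_basic[OF g1] and gb2 = good_basic[OF g2]
  note p1 = pt1[OF g1 s E] and p2 = pt1[OF g2 s E]
  note d = pt2[OF g1 g2 s E Lb]
  have Ep: "0 < E" using p1 by simp
  have L0: "0 \<le> L" using Lb by (metis abs_ge_zero order_trans zero_less_one)
  have E2: "E^2 \<le> 4/\<delta>^2"
  proof -
    have "E^2 \<le> (2/\<delta>)^2" using p1(5) Ep by (intro power_mono) auto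
    then show ?thesis by (simp add: power_divide)
  qed
  define a1 where "a1 = Q1 s / Rf Q1 s"
  define a2 where "a2 = Q2 s / Rf Q2 s"
  define u1 where "u1 = 1 / Rf Q1 s"
  define u2 where "u2 = 1 / Rf Q2 s"
  define v1 where "v1 = 1 / Bf Q1 s"
  define v2 where "v2 = 1 / Bf Q2 s"
  define h1 where "h1 = hf Q1 s"
  define h2 where "h2 = hf Q2 s"
  define g1' where "g1' = gf Q1 s"
  define g2' where "g2' = gf Q2 s"
  define p1' where "p1' = deriv Q1 s"
  define p2' where "p2' = deriv Q2 s"
  have P1: "Pf Q1 s = - 2 * h1 * a1 + (- 16 * s * (u1 * v1^2)) * p1' - g1' * h1"
    unfolding Pf_split[OF gb1(1) s] h1_def a1_def u1_def v1_def p1'_def g1'_def ..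
  have P2: "Pf Q2 s = - 2 * h2 * a2 + (- 16 * s * (u2 * v2^2)) * p2' - g2' * h2"
    unfolding Pf_split[OF gb2(1) s] h2_def a2_def u2_def v2_def p2'_def g2'_def ..
  have ba1: "\<bar>a1\<bar> \<le> E" and ba2: "\<bar>a2\<bar> \<le> E" using p1(8) p2(8) by (simp_all add: a1_def a2_def)
  have bu1: "\<bar>u1\<bar> \<le> E" and bu2: "\<bar>u2\<bar> \<le> E" using p1(11) p2(11) by (simp_all add: u1_def u2_def)
  have bv1: "\<bar>v1\<bar> \<le> E" and bv2: "\<bar>v2\<bar> \<le> E" using p1(12) p2(12) by (simp_all add: v1_def v2_def)
  have bh1: "\<bar>h1\<bar> \<le> 8 * E^2" and bh2: "\<bar>h2\<bar> \<le> 8 * E^2" using p1(7) p2(7) by (simp_all add: h1_def h2_def)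
  have bg1: "\<bar>g1'\<bar> \<le> 4 * E" and bg2: "\<bar>g2'\<bar> \<le> 4 * E" using p1(6) p2(6) by (simp_all add: g1'_def g2'_def)
  have da: "\<bar>a1 - a2\<bar> \<le> 4 * L * E^3" using d(1) by (simp add: a1_def a2_def)
  have dg: "\<bar>g1' - g2'\<bar> \<le> 16 * L * E^3" using d(2) by (simp add: g1'_def g2'_def)
  have dh: "\<bar>h1 - h2\<bar> \<le> 32 * L * E^2 / \<delta>" using d(3) by (simp add: h1_def h2_def)
  have du: "\<bar>u1 - u2\<bar> \<le> 16 * L * E / \<delta>^2" using d(4) by (simp add: u1_def u2_def)
  have dv: "\<bar>v1 - v2\<bar> \<le> (2/\<delta> + 16/\<delta>^2) * L * E" using d(5) by (simp add: v1_def v2_def)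
  have bw1: "\<bar>u1 * v1^2\<bar> \<le> E^3"
  proof -
    have "\<bar>u1 * (v1 * v1)\<bar> \<le> E * (E * E)" using bu1 bv1 by (intro abs_mult_le) auto
    then show ?thesis by (simp add: power2_eq_square power3_eq_cube)
  qed
  define cw where "cw = 48/\<delta>^2 + 4/\<delta>"
  have dw: "\<bar>u1 * v1^2 - u2 * v2^2\<bar> \<le> cw * L * E^3"
  proof -
    have dv2: "\<bar>v1^2 - v2^2\<bar> \<le> ((2/\<delta> + 16/\<delta>^2) * L * E) * (2 * E)"
    proof -
      have "v1^2 - v2^2 = (v1 - v2) * (v1 + v2)" by (simp add: power2_eq_square algebra_simps)
      moreover have "\<bar>v1 + v2\<bar> \<le> 2 * E" using bv1 bv2 by linarith
      ultimately show ?thesis using dv by (simp only: abs_mult_le)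
    qed
    have "\<bar>u1 * v1^2 - u2 * v2^2\<bar> \<le> \<bar>u1 - u2\<bar> * \<bar>v1^2\<bar> + \<bar>u2\<bar> * \<bar>v1^2 - v2^2\<bar>" by (rule diff_prod)
    also have "\<dots> \<le> (16 * L * E / \<delta>^2) * E^2 + E * (((2/\<delta> + 16/\<delta>^2) * L * E) * (2 * E))"
    proof (intro add_mono mult_mono)
      show "\<bar>v1^2\<bar> \<le> E^2" using bv1 by (simp add: power_mono abs_le_square_iff power2_abs) (metis abs_ge_zero power2_abs power_mono)
    qed (use du bu2 dv2 L0 Ep gb1 in auto)
    also have "\<dots> = cw * L * E^3" unfolding cw_def by (simp add: power2_eq_square power3_eq_cube field_simps)
    finally show ?thesis .
  qed
  show "\<bar>Pf Q1 s\<bar> \<le> (48 + 16 * N1) * E^3"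
  proof -
    have t1: "\<bar>- 2 * h1 * a1\<bar> \<le> 2 * (8 * E^2) * E"
      using bh1 ba1 by (simp add: abs_mult mult_mono')
    have t2: "\<bar>(- 16 * s * (u1 * v1^2)) * p1'\<bar> \<le> 16 * E^3 * N1"
    proof -
      have "\<bar>(- 16 * s * (u1 * v1^2)) * p1'\<bar> = 16 * \<bar>u1 * v1^2\<bar> * (s * \<bar>p1'\<bar>)"
        using s by (simp add: abs_mult)
      also have "\<dots> \<le> 16 * E^3 * N1" using bw1 N1 Ep s unfolding p1'_def
        by (intro mult_mono mult_left_mono) auto
      finally show ?thesis .
    qed
    have t3: "\<bar>g1' * h1\<bar> \<le> (4 * E) * (8 * E^2)" using bg1 bh1 by (rule abs_mult_le)
    have "\<bar>Pf Q1 s\<bar> \<le> \<bar>- 2 * h1 * a1\<bar> + \<bar>(- 16 * s * (u1 * v1^2)) * p1'\<bar> + \<bar>g1' * h1\<bar>"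
      unfolding P1 by linarith
    also have "\<dots> \<le> 2 * (8 * E^2) * E + 16 * E^3 * N1 + (4 * E) * (8 * E^2)"
      using t1 t2 t3 by linarith
    also have "\<dots> = (48 + 16 * N1) * E^3" by (simp add: power2_eq_square power3_eq_cube algebra_simps)
    finally show ?thesis .
  qed
  have E5: "E^5 \<le> 4/\<delta>^2 * E^3"
  proof -
    have "E^5 = E^2 * E^3" by (simp add: power_add[symmetric])
    also have "\<dots> \<le> 4/\<delta>^2 * E^3" using E2 Ep by (intro mult_right_mono) auto
    finally show ?thesis .
  qed
  have x1: "\<bar>h1 * a1 - h2 * a2\<bar> \<le> (32/\<delta> + 128/\<delta>^2) * L * E^3"
  proof -
    have "\<bar>h1 * a1 - h2 * a2\<bar> \<le> \<bar>h1 - h2\<bar> * \<bar>a1\<bar> + \<bar>h2\<bar> * \<bar>a1 - a2\<bar>" by (rule diff_prod)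
    also have "\<dots> \<le> (32 * L * E^2 / \<delta>) * E + (8 * E^2) * (4 * L * E^3)"
      using dh ba1 bh2 da L0 Ep gb1 by (intro add_mono mult_mono) auto
    also have "\<dots> = 32/\<delta> * L * E^3 + 32 * L * E^5" by (simp add: eval_nat_numeral algebra_simps)
    also have "\<dots> \<le> 32/\<delta> * L * E^3 + 32 * L * (4/\<delta>^2 * E^3)"
      using E5 L0 gb1 by (intro add_mono mult_left_mono) auto
    also have "\<dots> = (32/\<delta> + 128/\<delta>^2) * L * E^3" by (simp add: algebra_simps)
    finally show ?thesis .
  qed
  have x3: "\<bar>g1' * h1 - g2' * h2\<bar> \<le> (128/\<delta> + 512/\<delta>^2) * L * E^3"
  proof -
    have "\<bar>g1' * h1 - g2' * h2\<bar> \<le> \<bar>g1' - g2'\<bar> * \<bar>h1\<bar> + \<bar>g2'\<bar> * \<bar>h1 - h2\<bar>" by (rule diff_prod)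
    also have "\<dots> \<le> (16 * L * E^3) * (8 * E^2) + (4 * E) * (32 * L * E^2 / \<delta>)"
      using dg bh1 bg2 dh L0 Ep gb1 by (intro add_mono mult_mono) auto
    also have "\<dots> = 128 * L * E^5 + 128/\<delta> * L * E^3" by (simp add: eval_nat_numeral algebra_simps)
    also have "\<dots> \<le> 128 * L * (4/\<delta>^2 * E^3) + 128/\<delta> * L * E^3"
      using E5 L0 gb1 by (intro add_mono mult_left_mono) auto
    also have "\<dots> = (128/\<delta> + 512/\<delta>^2) * L * E^3" by (simp add: algebra_simps)
    finally show ?thesis .
  qed
  have x2: "\<bar>s * (u1 * v1^2 * p1' - u2 * v2^2 * p2')\<bar> \<le> E^3 * N + cw * L * E^3 * N2"
  proof -
    have "s * (u1 * v1^2 * p1' - u2 * v2^2 * p2') = (u1 * v1^2) * (s * (p1' - p2')) + (u1 * v1^2 - u2 * v2^2) * (s * p2')"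
      by (simp add: algebra_simps)
    then have "\<bar>s * (u1 * v1^2 * p1' - u2 * v2^2 * p2')\<bar> \<le> \<bar>u1 * v1^2\<bar> * \<bar>s * (p1' - p2')\<bar> + \<bar>u1 * v1^2 - u2 * v2^2\<bar> * \<bar>s * p2'\<bar>"
      by (metis abs_mult abs_triangle_ineq)
    also have "\<dots> \<le> E^3 * N + cw * L * E^3 * N2"
    proof (intro add_mono mult_mono)
      show "\<bar>s * (p1' - p2')\<bar> \<le> N" using N s by (simp add: abs_mult p1'_def p2'_def)
      show "\<bar>s * p2'\<bar> \<le> N2" using N2 s by (simp add: abs_mult p2'_def)
      show "0 \<le> cw * L * E^3" using L0 Ep gb1 by (simp add: cw_def)
    qed (use bw1 dw Ep in auto)
    finally show ?thesis .
  qed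
  have "Pf Q1 s - Pf Q2 s = - 2 * (h1 * a1 - h2 * a2) - 16 * (s * (u1 * v1^2 * p1' - u2 * v2^2 * p2')) - (g1' * h1 - g2' * h2)"
    unfolding P1 P2 by (simp add: algebra_simps)
  then have "\<bar>Pf Q1 s - Pf Q2 s\<bar> \<le> 2 * \<bar>h1 * a1 - h2 * a2\<bar> + 16 * \<bar>s * (u1 * v1^2 * p1' - u2 * v2^2 * p2')\<bar> + \<bar>g1' * h1 - g2' * h2\<bar>"
    by (simp only: tri3)
  also have "\<dots> \<le> 2 * ((32/\<delta> + 128/\<delta>^2) * L * E^3) + 16 * (E^3 * N + cw * L * E^3 * N2) + (128/\<delta> + 512/\<delta>^2) * L * E^3"
    using x1 x2 x3 by (intro add_mono mult_left_mono) auto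
  also have "\<dots> = ((192/\<delta> + 768/\<delta>^2) * L + 16 * N + 16 * (48/\<delta>^2 + 4/\<delta>) * L * N2) * E^3"
    unfolding cw_def by (simp add: algebra_simps)
  finally show "\<bar>Pf Q1 s - Pf Q2 s\<bar> \<le> ((192/\<delta> + 768/\<delta>^2) * L + 16 * N + 16 * (48/\<delta>^2 + 4/\<delta>) * L * N2) * E^3" .
qed


lemma rQ'_bounded: assumes Q: "Q \<in> classQ" shows "\<exists>M. \<forall>r>0. r * deriv Q r \<le> M"
proof -
  have l0: "((\<lambda>r. r * deriv Q r) \<longlongrightarrow> 0) (at_right 0)" and li: "((\<lambda>r. r * deriv Q r) \<longlongrightarrow> 0) at_top"
    using Q by (auto simp: classQ_def)
  have "eventually (\<lambda>r. r * deriv Q r < 1) (at_right 0)"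
    using order_tendstoD(2)[OF l0, of 1] by simp
  then obtain a where a: "a > 0" "\<And>y. 0 < y \<Longrightarrow> y < a \<Longrightarrow> y * deriv Q y < 1"
    unfolding eventually_at_right_field by auto
  have "eventually (\<lambda>r. r * deriv Q r < 1) at_top"
    using order_tendstoD(2)[OF li, of 1] by simp
  then obtain b where b: "\<And>y. y \<ge> b \<Longrightarrow> y * deriv Q y < 1"
    unfolding eventually_at_top_linorder by auto
  define c where "c = max a b"
  have cont: "continuous_on {a..c} (\<lambda>r. r * deriv Q r)"
  proof -
    have "continuous_on {0<..} (deriv Q)" using Q by (simp add: classQ_def)
    then have "continuous_on {a..c} (deriv Q)" by (rule continuous_on_subset) (use a in auto)
    then show ?thesis by (intro continuous_intros)
  qed
  have ne: "{a..c} \<noteq> {}" by (simp add: c_def)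
  obtain x where x: "x \<in> {a..c}" "\<And>y. y \<in> {a..c} \<Longrightarrow> y * deriv Q y \<le> x * deriv Q x"
    using continuous_attains_sup[OF compact_Icc ne cont] by auto
  show ?thesis
  proof (intro exI[of _ "max 1 (x * deriv Q x)"] allI impI)
    fix r :: real assume r: "r > 0"
    show "r * deriv Q r \<le> max 1 (x * deriv Q x)"
    proof (cases "r < a")
      case True then show ?thesis using a(2)[OF r] by simp
    next
      case False
      show ?thesis
      proof (cases "r \<le> c")
        case True then show ?thesis using x(2)[of r] False by simp
      next
        case False2: False
        then have "r \<ge> b" by (simp add: c_def)
        then show ?thesis using b[of r] by simp
      qed
    qed
  qed
qed

lemma NN_Q: assumes Q: "Q \<in> classQ" and r: "r > 0"
  shows "r * \<bar>deriv Q r\<bar> \<le> NN Q" "0 \<le> NN Q"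
proof -
  obtain M where M: "\<And>r. r > 0 \<Longrightarrow> r * deriv Q r \<le> M" using rQ'_bounded[OF Q] by blast
  have pos: "\<And>r. r > 0 \<Longrightarrow> deriv Q r > 0" using Q by (simp add: classQ_def)
  have bdd: "bdd_above ((\<lambda>r. r * \<bar>deriv Q r\<bar>) ` {0<..})"
    using M pos by (auto intro!: bdd_aboveI[of _ M] simp: abs_of_pos)
  show "r * \<bar>deriv Q r\<bar> \<le> NN Q" unfolding NN_def using r by (intro cSUP_upper[OF _ bdd]) auto
  moreover have "0 \<le> r * \<bar>deriv Q r\<bar>" using r by simp
  ultimately show "0 \<le> NN Q" by linarith
qed

lemma NN_diff: assumes Q1: "Q1 \<in> classQ" and Q2: "Q2 \<in> classQ" and r: "r > 0"
  shows "r * \<bar>deriv Q1 r - deriv Q2 r\<bar> \<le> NN (\<lambda>s. Q1 s - Q2 s)" "0 \<le> NN (\<lambda>s. Q1 s - Q2 s)"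
proof -
  have dd: "deriv (\<lambda>s. Q1 s - Q2 s) x = deriv Q1 x - deriv Q2 x" if "x > 0" for x
    using DERIV_diff[OF cQ_deriv[OF Q1 that] cQ_deriv[OF Q2 that]] by (rule DERIV_imp_deriv)
  have bdd: "bdd_above ((\<lambda>r. r * \<bar>deriv (\<lambda>s. Q1 s - Q2 s) r\<bar>) ` {0<..})"
  proof (rule bdd_aboveI[of _ "NN Q1 + NN Q2"])
    fix y assume "y \<in> (\<lambda>r. r * \<bar>deriv (\<lambda>s. Q1 s - Q2 s) r\<bar>) ` {0<..}"
    then obtain x where x: "x > 0" "y = x * \<bar>deriv Q1 x - deriv Q2 x\<bar>" using dd by auto
    have "x * \<bar>deriv Q1 x - deriv Q2 x\<bar> \<le> x * \<bar>deriv Q1 x\<bar> + x * \<bar>deriv Q2 x\<bar>"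
      using x(1) by (simp add: distrib_left[symmetric] mult_left_mono abs_triangle_ineq4)
    then show "y \<le> NN Q1 + NN Q2" using NN_Q(1)[OF Q1 x(1)] NN_Q(1)[OF Q2 x(1)] x(2) by linarith
  qed
  have "r * \<bar>deriv (\<lambda>s. Q1 s - Q2 s) r\<bar> \<le> NN (\<lambda>s. Q1 s - Q2 s)"
    unfolding NN_def using r by (intro cSUP_upper[OF _ bdd]) auto
  then show "r * \<bar>deriv Q1 r - deriv Q2 r\<bar> \<le> NN (\<lambda>s. Q1 s - Q2 s)" using dd[OF r] by simp
  moreover have "0 \<le> r * \<bar>deriv Q1 r - deriv Q2 r\<bar>" using r by simp
  ultimately show "0 \<le> NN (\<lambda>s. Q1 s - Q2 s)" by linarith
qed

lemma Linf_facts: assumes Q1: "Q1 \<in> classQ" and Q2: "Q2 \<in> classQ"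
  shows "\<forall>x>0. \<bar>Q1 x - Q2 x\<bar> \<le> Linf (\<lambda>s. Q1 s - Q2 s)" "Linf (\<lambda>s. Q1 s - Q2 s) \<le> 1"
    "0 \<le> Linf (\<lambda>s. Q1 s - Q2 s)"
proof -
  have b: "\<bar>Q1 x - Q2 x\<bar> \<le> 1" if "x > 0" for x
    using cQ_pos[OF Q1 that] cQ_pos[OF Q2 that] by (simp add: abs_le_iff)
  have bdd: "bdd_above ((\<lambda>x. \<bar>Q1 x - Q2 x\<bar>) ` {0<..})" using b by (auto intro!: bdd_aboveI[of _ 1])
  show A: "\<forall>x>0. \<bar>Q1 x - Q2 x\<bar> \<le> Linf (\<lambda>s. Q1 s - Q2 s)"
    unfolding Linf_def by (auto intro!: cSUP_upper[OF _ bdd])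
  show "Linf (\<lambda>s. Q1 s - Q2 s) \<le> 1" unfolding Linf_def by (rule cSUP_least) (use b in auto)
  show "0 \<le> Linf (\<lambda>s. Q1 s - Q2 s)" using A[rule_format, of 1] by (meson abs_ge_zero order_trans zero_less_one)
qed

lemma exp_diff_bound: "\<bar>exp (- a) - exp (- b)\<bar> \<le> max (exp (- a)) (exp (- b)) * \<bar>a - b\<bar>" for a b :: real
proof -
  have k: "exp (- x) - exp (- y) \<le> exp (- x) * (y - x)" if "x \<le> y" for x y :: real
  proof -
    have "1 + (x - y) \<le> exp (x - y)" by (rule exp_ge_add_one_self)
    then have "1 - exp (x - y) \<le> y - x" by linarith
    then have "exp (- x) * (1 - exp (x - y)) \<le> exp (- x) * (y - x)" by (intro mult_left_mono) auto
    moreover have "exp (- x) * exp (x - y) = exp (- y)" by (simp add: exp_add[symmetric])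
    ultimately show ?thesis by (simp add: algebra_simps)
  qed
  show ?thesis
  proof (cases "a \<le> b")
    case True
    have "exp (- b) \<le> exp (- a)" using True by simp
    then show ?thesis using k[OF True] True by (simp add: abs_if max_def)
  next
    case False
    then have F: "b \<le> a" by simp
    have "exp (- a) \<le> exp (- b)" using F by simp
    then show ?thesis using k[OF F] F by (simp add: abs_if max_def)
  qed
qed

lemma pow_le4: "(r::real) \<ge> 0 \<Longrightarrow> 1 + r^4 \<le> (1 + r)^4"
proof -
  assume r: "r \<ge> 0"
  have "(1 + r)^4 = 1 + r^4 + (4*r + 6*r^2 + 4*r^3)" by (simp add: eval_nat_numeral algebra_simps)
  moreover have "0 \<le> 4*r + 6*r^2 + 4*r^3" using r by simp
  ultimately show ?thesis by linarith
qed

lemma pow_le5: "(r::real) \<ge> 0 \<Longrightarrow> 1 + r^5 \<le> (1 + r)^5"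
proof -
  assume r: "r \<ge> 0"
  have "(1 + r)^5 = 1 + r^5 + (5*r + 10*r^2 + 10*r^3 + 5*r^4)" by (simp add: eval_nat_numeral algebra_simps)
  moreover have "0 \<le> 5*r + 10*r^2 + 10*r^3 + 5*r^4" using r by simp
  ultimately show ?thesis by linarith
qed

lemma first_bound: assumes g1: "good \<delta> Q1" and g2: "good \<delta> Q2" and r: "r > 0"
  and Lb: "\<forall>x>0. \<bar>Q1 x - Q2 x\<bar> \<le> L"
  shows "(1 + r^4) * \<bar>WQ Q1 r - WQ Q2 r\<bar> \<le> 16 * (8 * (128/\<delta>^3) + 32/\<delta>) / \<delta>^4 * L"
proof -
  note gb1 = good_basic[OF g1] and gb2 = good_basic[OF g2]
  define E where "E = 2 / (\<delta> * (1 + r))"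
  define M where "M = 128/\<delta>^3"
  note p1 = pt1[OF g1 r E_def] and p2 = pt1[OF g2 r E_def]
  note d = pt2[OF g1 g2 r E_def Lb]
  have Ep: "E > 0" using p1 by simp
  have L0: "0 \<le> L" using Lb by (metis abs_ge_zero order_trans zero_less_one)
  have M0: "0 \<le> M" using gb1 by (simp add: M_def)
  define e1 where "e1 = exp (- GG Q1 r)"
  define e2 where "e2 = exp (- GG Q2 r)"
  have be1: "e1 \<le> E^2" and be2: "0 < e2" "e2 \<le> E^2" using p1 p2 by (simp_all add: e1_def e2_def)
  have de: "\<bar>e1 - e2\<bar> \<le> E^2 * (M * L)"
  proof -
    have "\<bar>e1 - e2\<bar> \<le> max e1 e2 * \<bar>GG Q1 r - GG Q2 r\<bar>" unfolding e1_def e2_def by (rule exp_diff_bound)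
    also have "\<dots> \<le> E^2 * (M * L)"
      using be1 be2 GG_diff[OF g1 g2 _ Lb, of r] r by (intro mult_mono) (auto simp: M_def)
    finally show ?thesis .
  qed
  have "WQ Q1 r - WQ Q2 r = e1 * hf Q1 r - e2 * hf Q2 r"
    unfolding W_eq[OF gb1(1) r] W_eq[OF gb2(1) r] e1_def e2_def ..
  then have "\<bar>WQ Q1 r - WQ Q2 r\<bar> \<le> \<bar>e1 - e2\<bar> * \<bar>hf Q1 r\<bar> + \<bar>e2\<bar> * \<bar>hf Q1 r - hf Q2 r\<bar>"
    using diff_prod by simp
  also have "\<dots> \<le> (E^2 * (M * L)) * (8 * E^2) + E^2 * (32 * L * E^2 / \<delta>)"
    using de p1(7) be2 d(3) by (intro add_mono mult_mono) auto
  also have "\<dots> = (8 * M + 32 / \<delta>) * L * E^4" by (simp add: eval_nat_numeral algebra_simps)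
  finally have w: "\<bar>WQ Q1 r - WQ Q2 r\<bar> \<le> (8 * M + 32 / \<delta>) * L * E^4" .
  have "(1 + r^4) * \<bar>WQ Q1 r - WQ Q2 r\<bar> \<le> (1 + r)^4 * ((8 * M + 32 / \<delta>) * L * E^4)"
    using pow_le4[of r] r w by (intro mult_mono) auto
  also have "\<dots> = (8 * M + 32 / \<delta>) * L * ((1 + r) * E)^4" by (simp add: power_mult_distrib)
  also have "(1 + r) * E = 2 / \<delta>"
  proof -
    have "0 < \<delta> + \<delta> * r" using gb1 r by (simp add: add_pos_pos)
    then show ?thesis using gb1 by (simp add: E_def field_simps)
  qed
  also have "(8 * M + 32 / \<delta>) * L * (2 / \<delta>)^4 = 16 * (8 * M + 32/\<delta>) / \<delta>^4 * L"
    by (simp add: power_divide)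
  finally show ?thesis by (simp add: M_def)
qed

lemma aux_lin: "(X::real) \<le> Y \<Longrightarrow> 0 \<le> T \<Longrightarrow> S + 16 * (X - Y) \<le> S + T"
  by (simp add: algebra_simps)

definition K2c :: "real \<Rightarrow> real" where
  "K2c \<delta> = 48 * (128/\<delta>^3) + (192/\<delta> + 768/\<delta>^2) + 16 * (128/\<delta>^3) + 16
      + 16 * (128/\<delta>^3) + 16 * (48/\<delta>^2 + 4/\<delta>)"

lemma second_bound: assumes g1: "good \<delta> Q1" and g2: "good \<delta> Q2" and r: "r > 0"
  and Lb: "\<forall>x>0. \<bar>Q1 x - Q2 x\<bar> \<le> L" and L1: "L \<le> 1"
  and N: "r * \<bar>deriv Q1 r - deriv Q2 r\<bar> \<le> N" and N2: "r * \<bar>deriv Q2 r\<bar> \<le> N2"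
  shows "(1 + r^5) * \<bar>deriv (WQ Q1) r - deriv (WQ Q2) r\<bar>
     \<le> 32 * K2c \<delta> / \<delta>^5 * N + 32 * K2c \<delta> / \<delta>^5 * (1 + N2) * L"
proof -
  note gb1 = good_basic[OF g1] and gb2 = good_basic[OF g2]
  define E where "E = 2 / (\<delta> * (1 + r))"
  define M where "M = 128/\<delta>^3"
  define cP where "cP = 192/\<delta> + 768/\<delta>^2"
  define cw where "cw = 48/\<delta>^2 + 4/\<delta>"
  have K2: "K2c \<delta> = 48 * M + cP + 16 * M + 16 + 16 * M + 16 * cw"
    by (simp add: K2c_def M_def cP_def cw_def)
  note p1 = pt1[OF g1 r E_def] and p2 = pt1[OF g2 r E_def]
  have Ep: "E > 0" using p1 by simp
  have L0: "0 \<le> L" using Lb by (metis abs_ge_zero order_trans zero_less_one)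
  have M0: "0 \<le> M" and cP0: "0 \<le> cP" and cw0: "0 \<le> cw" using gb1 by (simp_all add: M_def cP_def cw_def)
  have N0: "0 \<le> N" and N20: "0 \<le> N2" using N N2 r by (metis abs_ge_zero mult_nonneg_nonneg less_imp_le order_trans)+
  have N1: "r * \<bar>deriv Q1 r\<bar> \<le> N + N2"
  proof -
    have "\<bar>deriv Q1 r\<bar> \<le> \<bar>deriv Q1 r - deriv Q2 r\<bar> + \<bar>deriv Q2 r\<bar>" by linarith
    then have "r * \<bar>deriv Q1 r\<bar> \<le> r * \<bar>deriv Q1 r - deriv Q2 r\<bar> + r * \<bar>deriv Q2 r\<bar>"
      using r by (simp add: distrib_left[symmetric] mult_left_mono)
    then show ?thesis using N N2 by linarith
  qed
  note q = pt3[OF g1 g2 r E_def Lb N1 N N2]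
  define e1 where "e1 = exp (- GG Q1 r)"
  define e2 where "e2 = exp (- GG Q2 r)"
  have be1: "e1 \<le> E^2" and be2: "0 < e2" "e2 \<le> E^2" using p1 p2 by (simp_all add: e1_def e2_def)
  have de: "\<bar>e1 - e2\<bar> \<le> E^2 * (M * L)"
  proof -
    have "\<bar>e1 - e2\<bar> \<le> max e1 e2 * \<bar>GG Q1 r - GG Q2 r\<bar>" unfolding e1_def e2_def by (rule exp_diff_bound)
    also have "\<dots> \<le> E^2 * (M * L)"
      using be1 be2 GG_diff[OF g1 g2 _ Lb, of r] r by (intro mult_mono) (auto simp: M_def)
    finally show ?thesis .
  qed
  have "deriv (WQ Q1) r - deriv (WQ Q2) r = e1 * Pf Q1 r - e2 * Pf Q2 r"
    unfolding DERIV_imp_deriv[OF W_deriv[OF gb1(1) r]] DERIV_imp_deriv[OF W_deriv[OF gb2(1) r]] e1_def e2_def ..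
  then have "\<bar>deriv (WQ Q1) r - deriv (WQ Q2) r\<bar> \<le> \<bar>e1 - e2\<bar> * \<bar>Pf Q1 r\<bar> + \<bar>e2\<bar> * \<bar>Pf Q1 r - Pf Q2 r\<bar>"
    using diff_prod by simp
  also have "\<dots> \<le> (E^2 * (M * L)) * ((48 + 16 * (N + N2)) * E^3)
       + E^2 * ((cP * L + 16 * N + 16 * cw * L * N2) * E^3)"
    using de q be2 by (intro add_mono mult_mono) (auto simp: cP_def cw_def)
  also have "\<dots> = (M * L * (48 + 16 * (N + N2)) + cP * L + 16 * N + 16 * cw * L * N2) * E^5"
    by (simp add: eval_nat_numeral algebra_simps)
  also have "\<dots> \<le> (K2c \<delta> * (N + (1 + N2) * L)) * E^5"
  proof (rule mult_right_mono)
    have "(M * N) * L \<le> (M * N) * 1" using M0 N0 L1 by (intro mult_left_mono) auto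
    then have a: "M * L * N \<le> M * N" by (simp add: algebra_simps)
    have b: "0 \<le> M * L" "0 \<le> M * L * N2" "0 \<le> cP * N" "0 \<le> cw * N" "0 \<le> M * N" "0 \<le> cP * L * N2"
      "0 \<le> cw * L" "0 \<le> L * N2" "0 \<le> cw * L * N2" "0 \<le> M * N2 * L" "0 \<le> cP * L"
      using M0 L0 N0 N20 cP0 cw0 by auto
    have e1: "M * L * (48 + 16 * (N + N2)) + cP * L + 16 * N + 16 * cw * L * N2
        = (48 * (M * L) + 16 * (M * N) + 16 * (M * L * N2) + cP * L + 16 * N + 16 * cw * L * N2) + 16 * (M * L * N - M * N)"
      by (simp add: algebra_simps)
    have e2: "K2c \<delta> * (N + (1 + N2) * L) = (48 * (M * L) + 16 * (M * N) + 16 * (M * L * N2) + cP * L + 16 * N + 16 * cw * L * N2)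
        + (64 * (M * N) + cP * N + 16 * (cw * N) + 32 * (M * L) + 16 * L + 16 * (cw * L) + 64 * (M * N2 * L) + cP * L * N2 + 16 * (L * N2))"
      unfolding K2 by (simp add: algebra_simps)
    have nn: "0 \<le> 64 * (M * N) + cP * N + 16 * (cw * N) + 32 * (M * L) + 16 * L + 16 * (cw * L) + 64 * (M * N2 * L) + cP * L * N2 + 16 * (L * N2)"
      using b L0 by simp
    show "M * L * (48 + 16 * (N + N2)) + cP * L + 16 * N + 16 * cw * L * N2 \<le> K2c \<delta> * (N + (1 + N2) * L)"
      unfolding e1 e2 by (rule aux_lin[OF a nn])
  qed (use Ep in simp)
  finally have w: "\<bar>deriv (WQ Q1) r - deriv (WQ Q2) r\<bar> \<le> K2c \<delta> * (N + (1 + N2) * L) * E^5" .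
  have K0: "0 \<le> K2c \<delta>" using K2 M0 cP0 cw0 by simp
  have "(1 + r^5) * \<bar>deriv (WQ Q1) r - deriv (WQ Q2) r\<bar> \<le> (1 + r)^5 * (K2c \<delta> * (N + (1 + N2) * L) * E^5)"
    using pow_le5[of r] r w by (intro mult_mono) auto
  also have "\<dots> = K2c \<delta> * (N + (1 + N2) * L) * ((1 + r) * E)^5" by (simp add: power_mult_distrib)
  also have "(1 + r) * E = 2 / \<delta>"
  proof -
    have "0 < \<delta> + \<delta> * r" using gb1 r by (simp add: add_pos_pos)
    then show ?thesis using gb1 by (simp add: E_def field_simps)
  qed
  also have "K2c \<delta> * (N + (1 + N2) * L) * (2 / \<delta>)^5 = 32 * K2c \<delta> / \<delta>^5 * N + 32 * K2c \<delta> / \<delta>^5 * (1 + N2) * L"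
    by (simp add: power_divide add_divide_distrib algebra_simps)
  finally show ?thesis .
qed

theorem lemma6p3:
  "\<forall>\<delta>::real. \<delta> > 0 \<longrightarrow> (\<exists>C>0. \<forall>Q1 Q2.
     Q1 \<in> classQ \<and> Q2 \<in> classQ \<and>
     \<delta> \<le> min (Q1 1) (Q2 1) \<and> max (Q1 1) (Q2 1) \<le> sqrt (1 - \<delta>\<^sup>2) \<longrightarrow>
     (\<forall>r>0. (1 + r ^ 4) * \<bar>WQ Q1 r - WQ Q2 r\<bar> \<le> C * Linf (\<lambda>s. Q1 s - Q2 s)) \<and>
     (\<forall>r>0. (1 + r ^ 5) * \<bar>deriv (WQ Q1) r - deriv (WQ Q2) r\<bar>
        \<le> C * NN (\<lambda>s. Q1 s - Q2 s) + C * (1 + NN Q2) * Linf (\<lambda>s. Q1 s - Q2 s)))"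
proof (intro allI impI)
  fix \<delta> :: real assume \<delta>: "\<delta> > 0"
  define C1 where "C1 = 16 * (8 * (128/\<delta>^3) + 32/\<delta>) / \<delta>^4"
  define C2 where "C2 = 32 * K2c \<delta> / \<delta>^5"
  define C where "C = max C1 C2"
  have C1C: "C1 \<le> C" and C2C: "C2 \<le> C" by (simp_all add: C_def)
  have "0 < C1" using \<delta> by (simp add: C1_def add_pos_pos)
  then have Cp: "0 < C" using C1C by linarith
  show "\<exists>C>0. \<forall>Q1 Q2.
     Q1 \<in> classQ \<and> Q2 \<in> classQ \<and>
     \<delta> \<le> min (Q1 1) (Q2 1) \<and> max (Q1 1) (Q2 1) \<le> sqrt (1 - \<delta>\<^sup>2) \<longrightarrow>
     (\<forall>r>0. (1 + r ^ 4) * \<bar>WQ Q1 r - WQ Q2 r\<bar> \<le> C * Linf (\<lambda>s. Q1 s - Q2 s)) \<and>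
     (\<forall>r>0. (1 + r ^ 5) * \<bar>deriv (WQ Q1) r - deriv (WQ Q2) r\<bar>
        \<le> C * NN (\<lambda>s. Q1 s - Q2 s) + C * (1 + NN Q2) * Linf (\<lambda>s. Q1 s - Q2 s))"
  proof (rule exI[of _ C], rule conjI[OF Cp], intro allI impI)
    fix Q1 Q2 :: "real \<Rightarrow> real"
    assume H: "Q1 \<in> classQ \<and> Q2 \<in> classQ \<and>
     \<delta> \<le> min (Q1 1) (Q2 1) \<and> max (Q1 1) (Q2 1) \<le> sqrt (1 - \<delta>\<^sup>2)"
    have g1: "good \<delta> Q1" and g2: "good \<delta> Q2" using H \<delta> by (auto simp: good_def)
    have Q1: "Q1 \<in> classQ" and Q2: "Q2 \<in> classQ" using H by auto
    define L where "L = Linf (\<lambda>s. Q1 s - Q2 s)"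
    have Lb: "\<forall>x>0. \<bar>Q1 x - Q2 x\<bar> \<le> L" and L1: "L \<le> 1" and L0: "0 \<le> L"
      using Linf_facts[OF Q1 Q2] by (simp_all add: L_def)
    have A: "\<forall>r>0. (1 + r ^ 4) * \<bar>WQ Q1 r - WQ Q2 r\<bar> \<le> C * Linf (\<lambda>s. Q1 s - Q2 s)"
    proof (intro allI impI)
      fix r :: real assume r: "r > 0"
      have "(1 + r ^ 4) * \<bar>WQ Q1 r - WQ Q2 r\<bar> \<le> C1 * L"
        unfolding C1_def by (rule first_bound[OF g1 g2 r Lb])
      also have "\<dots> \<le> C * L" using C1C L0 by (rule mult_right_mono)
      finally show "(1 + r ^ 4) * \<bar>WQ Q1 r - WQ Q2 r\<bar> \<le> C * Linf (\<lambda>s. Q1 s - Q2 s)"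
        by (simp add: L_def)
    qed
    have B: "\<forall>r>0. (1 + r ^ 5) * \<bar>deriv (WQ Q1) r - deriv (WQ Q2) r\<bar>
        \<le> C * NN (\<lambda>s. Q1 s - Q2 s) + C * (1 + NN Q2) * Linf (\<lambda>s. Q1 s - Q2 s)"
    proof (intro allI impI)
      fix r :: real assume r: "r > 0"
      define N where "N = NN (\<lambda>s. Q1 s - Q2 s)"
      define N2 where "N2 = NN Q2"
      have N: "r * \<bar>deriv Q1 r - deriv Q2 r\<bar> \<le> N" and N0: "0 \<le> N"
        using NN_diff[OF Q1 Q2 r] by (simp_all add: N_def)
      have N2: "r * \<bar>deriv Q2 r\<bar> \<le> N2" and N20: "0 \<le> N2"
        using NN_Q[OF Q2 r] by (simp_all add: N2_def)
      have "(1 + r ^ 5) * \<bar>deriv (WQ Q1) r - deriv (WQ Q2) r\<bar> \<le> C2 * N + C2 * (1 + N2) * L"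
        unfolding C2_def by (rule second_bound[OF g1 g2 r Lb L1 N N2])
      also have "\<dots> \<le> C * N + C * (1 + N2) * L"
      proof (rule add_mono)
        show "C2 * N \<le> C * N" by (rule mult_right_mono[OF C2C N0])
        have "0 \<le> 1 + N2" using N20 by simp
        then show "C2 * (1 + N2) * L \<le> C * (1 + N2) * L"
          by (rule mult_right_mono[OF mult_right_mono[OF C2C] L0])
      qed
      finally show "(1 + r ^ 5) * \<bar>deriv (WQ Q1) r - deriv (WQ Q2) r\<bar>
        \<le> C * NN (\<lambda>s. Q1 s - Q2 s) + C * (1 + NN Q2) * Linf (\<lambda>s. Q1 s - Q2 s)"
        by (simp add: N_def N2_def L_def)
    qed
    from A B show "(\<forall>r>0. (1 + r ^ 4) * \<bar>WQ Q1 r - WQ Q2 r\<bar> \<le> C * Linf (\<lambda>s. Q1 s - Q2 s)) \<and>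
     (\<forall>r>0. (1 + r ^ 5) * \<bar>deriv (WQ Q1) r - deriv (WQ Q2) r\<bar>
        \<le> C * NN (\<lambda>s. Q1 s - Q2 s) + C * (1 + NN Q2) * Linf (\<lambda>s. Q1 s - Q2 s))" ..
  qed
qed


end
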